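(* Let $S=\{1,\ldots,n\}$, let $\boldsymbol{P}(S)$ be the set of partitions of $S$, and let $\varrho(\mathcal{C})\ge0$ for $\mathcal{C}\in\boldsymbol{P}(S)$. Let $(\Sigma_t)_{t\ge0}$ be the partitioning process, i.e. the continuous-time Markov chain on $\boldsymbol{P}(S)$ with rate matrix $Q$ given as follows: for $\mathcal{B}\ne\mathcal{A}$, $Q(\mathcal{A},\mathcal{B})=\varrho^{A}_{\mathcal{B}_A}$ if $\mathcal{B}=(\mathcal{A}\setminus\{A\})\cup\mathcal{B}_A$ for some block $A\in\mathcal{A}$ and some partition $\mathcal{B}_A\ne\{A\}$ of $A$, and $Q(\mathcal{A},\mathcal{B})=0$ otherwise; and $Q(\mathcal{A},\mathcal{A})=-\sum_{\mathcal{C}\ne\mathcal{A}}Q(\mathcal{A},\mathcal{C})$. Here $\varrho^{A}_{\mathcal{B}_A}=\sum_{\mathcal{C}\in\boldsymbol{P}(S):\,\mathcal{C}|_A=\mathcal{B}_A}\varrho(\mathcal{C})$. Define $N:\mathbb{R}^{\boldsymbol{P}(S)}\to\mathbb{R}$ by $N(p)=\sum_{\mathcal{A}\in\boldsymbol{P}(S)}p(\mathcal{A})|\mathcal{A}|$. Then the law $p_t$ of $\Sigma_t$, which satisfies $\dot p_t=\sum_{\mathcal{A},\mathcal{B}}p_t(\mathcal{A})Q(\mathcal{A},\mathcal{B})(\mathcal{B}-\mathcal{A})$, satisfies a generalised gradient system with respect to $N$: $\dot p_t=K(p_t)\nabla N(p_t)$, where $K$ takes values in the symmetric positive semi-definite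 matrices, is continuous on the set of probability vectors on $\boldsymbol{P}(S)$ and smooth on its interior.
   Context: $|\mathcal{A}|$ is the number of blocks of $\mathcal{A}$. For a partition $\mathcal{C}$ of $S$ and $U\subseteq S$, $\mathcal{C}|_U=\{C\cap U: C\in\mathcal{C}\}\setminus\{\varnothing\}$ is the induced partition of $U$. Vectors in $\mathbb{R}^{\boldsymbol{P}(S)}$ are formal sums $\sum p(\mathcal{A})\mathcal{A}$ with each partition identified with a standard basis vector; $\nabla$ is the Euclidean gradient. *)

theory Defs
  imports "HOL-Analysis.Analysis" "HOL-Library.Disjoint_Sets"
begin

text \<open>The ground set S is the universe of a finite type 'n (so n = CARD('n)).
  Partitions of S form a (finite) type.\<close>

typedef 'a partition = "{P :: 'a set set. partition_on UNIV P}"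
proof
  show "{UNIV} \<in> {P :: 'a set set. partition_on UNIV P}"
    by (simp add: partition_on_def disjoint_def)
qed

instance partition :: (finite) finite
proof
  have "(UNIV :: 'a partition set) = Abs_partition ` {P :: 'a set set. partition_on UNIV P}"
    using type_definition.Abs_image[OF type_definition_partition] by (simp add: eq_commute)
  then show "finite (UNIV :: 'a partition set)" by (metis finite_imageI finite)
qed

abbreviation blocks :: "'a partition \<Rightarrow> 'a set set" where
  "blocks \<A> \<equiv> Rep_partition \<A>"

definition induced :: "'a set set \<Rightarrow> 'a set \<Rightarrow> 'a set set" where
  "induced \<C> U = ((\<lambda>C. C \<inter> U) ` \<C>) - {{}}"

definition rho_up :: "('a::finite partition \<Rightarrow> real) \<Rightarrow> 'a set \<Rightarrow> 'a set set \<Rightarrow> real" where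
  "rho_up \<rho> A BA = (\<Sum>\<C>\<in>{\<C>. induced (blocks \<C>) A = BA}. \<rho> \<C>)"

text \<open>Such a pair is unique if it exists; we sum over all of them.\<close>
definition splits :: "'a partition \<Rightarrow> 'a partition \<Rightarrow> ('a set \<times> 'a set set) set" where
  "splits \<A> \<B> = {(A, BA). A \<in> blocks \<A> \<and> partition_on A BA \<and> BA \<noteq> {A} \<and>
                     blocks \<B> = (blocks \<A> - {A}) \<union> BA}"

definition Qoff :: "('a::finite partition \<Rightarrow> real) \<Rightarrow> 'a partition \<Rightarrow> 'a partition \<Rightarrow> real" where
  "Qoff \<rho> \<A> \<B> = (if \<B> = \<A> then 0 else (\<Sum>(A, BA)\<in>splits \<A> \<B>. rho_up \<rho> A BA))"

definition Qrate :: "('a::finite partition \<Rightarrow> real) \<Rightarrow> 'a partition \<Rightarrow> 'a partition \<Rightarrow> real" where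
  "Qrate \<rho> \<A> \<B> = (if \<B> = \<A> then - (\<Sum>\<C>\<in>UNIV - {\<A>}. Qoff \<rho> \<A> \<C>) else Qoff \<rho> \<A> \<B>)"

definition master_rhs :: "('a::finite partition \<Rightarrow> real) \<Rightarrow> real ^ 'a partition \<Rightarrow> real ^ 'a partition" where
  "master_rhs \<rho> p = (\<Sum>\<A>\<in>UNIV. \<Sum>\<B>\<in>UNIV. (p $ \<A> * Qrate \<rho> \<A> \<B>) *\<^sub>R (axis \<B> 1 - axis \<A> 1))"

definition Nfun :: "real ^ 'a::finite partition \<Rightarrow> real" where
  "Nfun p = (\<Sum>\<A>\<in>UNIV. p $ \<A> * real (card (blocks \<A>)))"

definition prob_simplex :: "(real ^ 'a::finite partition) set" where
  "prob_simplex = {p. (\<forall>\<A>. 0 \<le> p $ \<A>) \<and> (\<Sum>\<A>\<in>UNIV. p $ \<A>) = 1}"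

fun Ck_on :: "nat \<Rightarrow> 'a::real_normed_vector set \<Rightarrow> ('a \<Rightarrow> 'b::real_normed_vector) \<Rightarrow> bool" where
  "Ck_on 0 U f = continuous_on U f"
| "Ck_on (Suc k) U f = (\<exists>f'. (\<forall>x\<in>U. (f has_derivative f' x) (at x)) \<and>
                              (\<forall>h. Ck_on k U (\<lambda>x. f' x h)))"

definition smooth_on :: "'a::real_normed_vector set \<Rightarrow> ('a \<Rightarrow> 'b::real_normed_vector) \<Rightarrow> bool" where
  "smooth_on U f = (\<forall>k. Ck_on k U f)"

end

theory Submission imports Defs begin

lemma rho_up_nonneg: assumes "\<And>C. 0 \<le> \<rho> C" shows "0 \<le> rho_up \<rho> A BA"
  unfolding rho_up_def by (rule sum_nonneg) (use assms in auto)

lemma Qoff_nonneg: assumes "\<And>C. 0 \<le> \<rho> C" shows "0 \<le> Qoff \<rho> A B"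
  unfolding Qoff_def using rho_up_nonneg[OF assms]
  by (auto intro!: sum_nonneg split: prod.splits)

lemma split_card:
  fixes A B :: "'a::finite partition"
  assumes "(A0, BA) \<in> splits A B"
  shows "card (blocks A) < card (blocks B)"
proof -
  have pA: "partition_on UNIV (blocks A)" using Rep_partition by auto
  have A0: "A0 \<in> blocks A" and pB: "partition_on A0 BA" and ne: "BA \<noteq> {A0}"
    and eq: "blocks B = (blocks A - {A0}) \<union> BA" using assms by (auto simp: splits_def)
  have A0ne: "A0 \<noteq> {}" using pA A0 by (auto simp: partition_on_def)
  have disj: "(blocks A - {A0}) \<inter> BA = {}"
  proof (rule ccontr)
    assume "(blocks A - {A0}) \<inter> BA \<noteq> {}"
    then obtain x where x1: "x \<in> blocks A" "x \<noteq> A0" and x2: "x \<in> BA" by auto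
    have "x \<subseteq> A0" "x \<noteq> {}" using pB x2 by (auto simp: partition_on_def)
    moreover have "x \<inter> A0 = {}" using pA x1 A0 by (auto simp: partition_on_def disjoint_def)
    ultimately show False by auto
  qed
  have c2: "card BA \<ge> 2"
  proof (rule ccontr)
    assume "\<not> card BA \<ge> 2"
    hence "card BA = 0 \<or> card BA = 1" by linarith
    moreover have "BA \<noteq> {}" using pB A0ne by (auto simp: partition_on_def)
    moreover have "finite BA" by simp
    ultimately have "card BA = 1" by auto
    then obtain X where "BA = {X}" using card_1_singletonE by blast
    then have "X = A0" using pB by (auto simp: partition_on_def)
    then show False using ne \<open>BA = {X}\<close> by simp
  qed
  have "card (blocks B) = card (blocks A - {A0}) + card BA"
    unfolding eq by (rule card_Un_disjoint) (use disj in auto)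
  also have "card (blocks A - {A0}) = card (blocks A) - 1" using A0 by simp
  finally show ?thesis using c2 A0 card_gt_0_iff[of "blocks A"] by fastforce
qed

lemma Qoff_card:
  assumes "Qoff \<rho> A B \<noteq> 0" shows "card (blocks A) < card (blocks B)"
proof -
  have "splits A B \<noteq> {}" using assms by (auto simp: Qoff_def split: if_splits)
  then obtain a b where "(a, b) \<in> splits A B" by auto
  then show ?thesis by (rule split_card)
qed

lemma Ck_const: "Ck_on k U (\<lambda>x. c)"
proof (induction k arbitrary: c)
  case 0 then show ?case by simp
next
  case (Suc k) then show ?case
    by (auto intro!: exI[of _ "\<lambda>x h. 0"])
qed

lemma Ck_linear: assumes "bounded_linear f" shows "Ck_on k U f"
proof (cases k)
  case 0 then show ?thesis using assms by (simp add: linear_continuous_on)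
next
  case (Suc m) then show ?thesis using assms Ck_const
    by (auto intro!: exI[of _ "\<lambda>x. f"] bounded_linear_imp_has_derivative)
qed

definition wt :: "('a::finite partition \<Rightarrow> real) \<Rightarrow> 'a partition \<Rightarrow> 'a partition \<Rightarrow> real" where
  "wt \<rho> A B = (if Qoff \<rho> A B = 0 then 0
      else Qoff \<rho> A B / (real (card (blocks B)) - real (card (blocks A))))"

definition dv :: "'a::finite partition \<Rightarrow> 'a partition \<Rightarrow> real ^ 'a partition" where
  "dv A B = axis B 1 - axis A 1"

definition outer :: "real ^ 'k::finite \<Rightarrow> real ^ 'k ^ 'k" where
  "outer d = (\<chi> i j. d $ i * d $ j)"

definition Kmat :: "('a::finite partition \<Rightarrow> real) \<Rightarrow> real ^ 'a partition \<Rightarrow> real ^ 'a partition ^ 'a partition" where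
  "Kmat \<rho> p = (\<Sum>A\<in>UNIV. \<Sum>B\<in>UNIV. (p $ A * wt \<rho> A B) *\<^sub>R outer (dv A B))"

definition cv :: "real ^ 'a::finite partition" where
  "cv = (\<chi> A. real (card (blocks A)))"

lemma outer_mult: "outer d *v g = (d \<bullet> g) *\<^sub>R d"
  by (simp add: vec_eq_iff outer_def matrix_vector_mult_def inner_vec_def sum_distrib_left mult_ac)

lemma sum_mv: "(\<Sum>x\<in>S. f x) *v g = (\<Sum>x\<in>S. f x *v g)"
  by (simp add: vec_eq_iff matrix_vector_mult_def sum_distrib_right sum.swap[of _ S])

lemma scale_mv: "(c *\<^sub>R M) *v g = c *\<^sub>R (M *v (g::real^'k::finite))"
  by (simp add: vec_eq_iff matrix_vector_mult_def sum_distrib_left mult_ac)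

lemma Kmat_mv: "Kmat \<rho> p *v g = (\<Sum>A\<in>UNIV. \<Sum>B\<in>UNIV. (p $ A * wt \<rho> A B * (dv A B \<bullet> g)) *\<^sub>R dv A B)"
  unfolding Kmat_def sum_mv scale_mv outer_mult by (simp add: mult_ac)

lemma Kmat_sym: "transpose (Kmat \<rho> p) = Kmat \<rho> p"
  by (simp add: vec_eq_iff transpose_def Kmat_def outer_def mult_ac)

lemma wt_nonneg: fixes \<rho> :: "'a::finite partition \<Rightarrow> real"
  assumes "\<And>C. 0 \<le> \<rho> C" shows "0 \<le> wt \<rho> A B"
proof -
  have "Qoff \<rho> A B \<noteq> 0 \<Longrightarrow> real (card (blocks A)) < real (card (blocks B))"
    using Qoff_card by auto
  then show ?thesis using Qoff_nonneg[OF assms, where A=A and B=B] unfolding wt_def by auto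
qed

lemma Kmat_psd: fixes \<rho> :: "'a::finite partition \<Rightarrow> real"
  assumes "\<And>C. 0 \<le> \<rho> C" "\<And>A. 0 \<le> p $ A" shows "0 \<le> v \<bullet> (Kmat \<rho> p *v v)"
proof -
  have t: "0 \<le> p $ A * wt \<rho> A B * (dv A B \<bullet> v) * (v \<bullet> dv A B)" for A B
  proof -
    have "0 \<le> wt \<rho> A B" by (rule wt_nonneg) (rule assms(1))
    then have "0 \<le> p $ A * wt \<rho> A B" using assms(2) by simp
    moreover have "0 \<le> (dv A B \<bullet> v) * (v \<bullet> dv A B)" by (simp add: inner_commute)
    ultimately show ?thesis by (metis mult.assoc mult_nonneg_nonneg)
  qed
  show ?thesis
  unfolding Kmat_mv inner_sum_right inner_scaleR_right
  using t by (auto intro!: sum_nonneg)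
qed

lemma dv_cv: "dv A B \<bullet> cv = real (card (blocks B)) - real (card (blocks A))"
  by (simp add: dv_def inner_diff_left inner_axis' cv_def)

lemma wt_cv: "wt \<rho> A B * (dv A B \<bullet> cv) = Qoff \<rho> A B"
proof (cases "Qoff \<rho> A B = 0")
  case False
  then have "real (card (blocks A)) < real (card (blocks B))" using Qoff_card by auto
  then show ?thesis using False by (simp add: wt_def dv_cv)
qed (simp add: wt_def)

lemma master_eq: "master_rhs \<rho> p = (\<Sum>A\<in>UNIV. \<Sum>B\<in>UNIV. (p $ A * Qoff \<rho> A B) *\<^sub>R dv A B)"
  unfolding master_rhs_def dv_def
  by (intro sum.cong refl) (auto simp: Qrate_def)

lemma Kmat_cv: "Kmat \<rho> p *v cv = master_rhs \<rho> p"
  unfolding Kmat_mv master_eq by (simp add: wt_cv mult.assoc)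

lemma Kmat_bl: "bounded_linear (Kmat \<rho>)"
  unfolding Kmat_def
  by (intro bounded_linear_sum bounded_linear_compose[OF bounded_linear_scaleR_left]
        bounded_linear_compose[OF bounded_linear_mult_left] bounded_linear_vec_nth)

lemma Nfun_bl: "bounded_linear (Nfun :: real ^ 'a::finite partition \<Rightarrow> real)"
  unfolding Nfun_def
  by (intro bounded_linear_sum bounded_linear_compose[OF bounded_linear_mult_left] bounded_linear_vec_nth)

lemma grad_eq:
  assumes "(Nfun has_derivative (\<lambda>h. g \<bullet> h)) (at p)"
  shows "g = cv"
proof -
  have "(Nfun has_derivative Nfun) (at p)" using Nfun_bl by (rule bounded_linear_imp_has_derivative)
  then have e: "(\<lambda>h. g \<bullet> h) = Nfun" using assms has_derivative_unique by blast
  have "g $ A = cv $ A" for A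
  proof -
    have "g $ A = g \<bullet> axis A 1" by (simp add: inner_axis)
    also have "\<dots> = Nfun (axis A 1)" using e by metis
    also have "\<dots> = (\<Sum>X\<in>UNIV. if X = A then real (card (blocks X)) else 0)"
      unfolding Nfun_def by (intro sum.cong) (auto simp: axis_def)
    also have "\<dots> = cv $ A" by (simp add: cv_def)
    finally show "g $ A = cv $ A" .
  qed
  then show ?thesis by (simp add: vec_eq_iff)
qed

theorem corollary5p3:
  fixes \<rho> :: "'n::finite partition \<Rightarrow> real"
  assumes rho_nonneg: "\<And>\<C>. 0 \<le> \<rho> \<C>"
  shows "\<exists>K :: real ^ 'n partition \<Rightarrow> real ^ 'n partition ^ 'n partition.
           (\<forall>p\<in>prob_simplex. transpose (K p) = K p \<and> (\<forall>v. 0 \<le> v \<bullet> (K p *v v)))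
         \<and> continuous_on prob_simplex K
         \<and> (\<exists>U. open U \<and> rel_interior prob_simplex \<subseteq> U \<and> smooth_on U K)
         \<and> (\<forall>p\<in>prob_simplex. \<forall>g. (Nfun has_derivative (\<lambda>h. g \<bullet> h)) (at p)
                \<longrightarrow> master_rhs \<rho> p = K p *v g)
         \<and> (\<forall>P :: real \<Rightarrow> real ^ 'n partition.
               (\<forall>t\<ge>0. P t \<in> prob_simplex \<and>
                  (P has_vector_derivative master_rhs \<rho> (P t)) (at t within {0..}))
               \<longrightarrow> (\<forall>t\<ge>0. \<forall>g. (Nfun has_derivative (\<lambda>h. g \<bullet> h)) (at (P t))
                      \<longrightarrow> (P has_vector_derivative K (P t) *v g) (at t within {0..})))"
proof (intro exI[of _ "Kmat \<rho>"] conjI ballI allI impI)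
  fix p :: "real ^ 'n partition" assume "p \<in> prob_simplex"
  then have pn: "\<And>A. 0 \<le> p $ A" by (simp add: prob_simplex_def)
  show "transpose (Kmat \<rho> p) = Kmat \<rho> p" by (rule Kmat_sym)
  fix v show "0 \<le> v \<bullet> (Kmat \<rho> p *v v)" by (rule Kmat_psd) (rule rho_nonneg, rule pn)
next
  show "continuous_on prob_simplex (Kmat \<rho>)" using Kmat_bl by (rule linear_continuous_on)
next
  show "\<exists>U. open U \<and> rel_interior prob_simplex \<subseteq> U \<and> smooth_on U (Kmat \<rho>)"
    using Kmat_bl Ck_linear by (auto simp: smooth_on_def intro!: exI[of _ UNIV])
next
  fix p :: "real ^ 'n partition" and g assume "(Nfun has_derivative (\<lambda>h. g \<bullet> h)) (at p)"
  then show "master_rhs \<rho> p = Kmat \<rho> p *v g" using grad_eq Kmat_cv by metis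
next
  fix P :: "real \<Rightarrow> real ^ 'n partition" and t :: real and g
  assume H: "\<forall>t\<ge>0. P t \<in> prob_simplex \<and>
                  (P has_vector_derivative master_rhs \<rho> (P t)) (at t within {0..})"
    and t: "0 \<le> t" and d: "(Nfun has_derivative (\<lambda>h. g \<bullet> h)) (at (P t))"
  have "Kmat \<rho> (P t) *v g = master_rhs \<rho> (P t)" using grad_eq[OF d] Kmat_cv by metis
  then show "(P has_vector_derivative Kmat \<rho> (P t) *v g) (at t within {0..})" using H t by simp
qed

end
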